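(* Let $U\subset\mathbb R^n$ be a smooth bounded domain and $H:\mathbb R^n\to\mathbb R$ satisfy: $H$ smooth with $H(0)<0$; $\lim_{|p|\to\infty}H(p)/|p|=\infty$; and there exist $\gamma,\delta>0$ with $DH(p)\cdot p-\gamma H(p)\ge\delta$ for all $p\in\mathbb R^n$. Let $\epsilon>0$. If $u$ and $v$ are (classical) solutions of $H(Dw)=\epsilon\Delta w$ in $U$, $w=0$ on $\partial U$, then $u=v$. *)

theory Defs
  imports "HOL-Analysis.Analysis"
begin

definition pd :: "'a::euclidean_space \<Rightarrow> ('a \<Rightarrow> real) \<Rightarrow> 'a \<Rightarrow> real" where
  "pd i f x = (THE d. ((\<lambda>t. f (x + t *\<^sub>R i)) has_real_derivative d) (at 0))"

fun iter_pd :: "'a::euclidean_space list \<Rightarrow> ('a \<Rightarrow> real) \<Rightarrow> 'a \<Rightarrow> real" where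
  "iter_pd [] f = f"
| "iter_pd (i # is) f = pd i (iter_pd is f)"

definition Ck_on :: "nat \<Rightarrow> 'a::euclidean_space set \<Rightarrow> ('a \<Rightarrow> real) \<Rightarrow> bool" where
  "Ck_on k S f \<longleftrightarrow>
     (\<forall>is. set is \<subseteq> Basis \<and> length is \<le> k \<longrightarrow>
        continuous_on S (iter_pd is f) \<and>
        (length is < k \<longrightarrow> (\<forall>x\<in>S. \<forall>i\<in>Basis.
           ((\<lambda>t. iter_pd is f (x + t *\<^sub>R i)) has_real_derivative pd i (iter_pd is f) x) (at 0))))"

definition smooth_on :: "'a::euclidean_space set \<Rightarrow> ('a \<Rightarrow> real) \<Rightarrow> bool" where
  "smooth_on S f \<longleftrightarrow> (\<forall>k. Ck_on k S f)"

definition grad :: "('a::euclidean_space \<Rightarrow> real) \<Rightarrow> 'a \<Rightarrow> 'a" where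
  "grad f x = (\<Sum>i\<in>Basis. pd i f x *\<^sub>R i)"

definition laplacian :: "('a::euclidean_space \<Rightarrow> real) \<Rightarrow> 'a \<Rightarrow> real" where
  "laplacian f x = (\<Sum>i\<in>Basis. pd i (pd i f) x)"

definition smooth_bounded_domain :: "'a::euclidean_space set \<Rightarrow> bool" where
  "smooth_bounded_domain U \<longleftrightarrow> open U \<and> bounded U \<and> connected U \<and> U \<noteq> {} \<and>
     (\<forall>x0\<in>frontier U. \<exists>r>0. \<exists>\<phi>. smooth_on UNIV \<phi> \<and> grad \<phi> x0 \<noteq> 0 \<and>
        U \<inter> ball x0 r = {x\<in>ball x0 r. \<phi> x < 0})"

definition classical_solution ::
    "('a::euclidean_space \<Rightarrow> real) \<Rightarrow> real \<Rightarrow> 'a set \<Rightarrow> ('a \<Rightarrow> real) \<Rightarrow> bool" where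
  "classical_solution H eps U w \<longleftrightarrow>
     Ck_on 2 U w \<and> continuous_on (closure U) w \<and>
     (\<forall>x\<in>U. H (grad w x) = eps * laplacian w x) \<and>
     (\<forall>x\<in>frontier U. w x = 0)"

end

theory Submission
  imports Defs
begin

lemma one_d_max2:
  fixes g g' :: "real \<Rightarrow> real"
  assumes d: "d > 0"
    and dg: "\<And>t. \<bar>t\<bar> < d \<Longrightarrow> (g has_real_derivative g' t) (at t)"
    and dg2: "(g' has_real_derivative c) (at 0)"
    and mx: "\<And>t. \<bar>t\<bar> < d \<Longrightarrow> g t \<le> g 0"
  shows "g' 0 = 0 \<and> c \<le> 0"
proof -
  have g0: "g' 0 = 0"
    by (rule DERIV_local_max[OF dg[of 0] d]) (use d mx in auto)
  have "c \<le> 0"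
  proof (rule ccontr)
    assume "\<not> c \<le> 0"
    then obtain d1 where d1: "d1 > 0" "\<And>h. h > 0 \<Longrightarrow> h < d1 \<Longrightarrow> g' 0 < g' (0 + h)"
      using DERIV_pos_inc_right[OF dg2] by force
    define t where "t = min d1 d / 2"
    have t: "0 < t" "t < d1" "t < d" using d d1 by (auto simp: t_def)
    have "\<And>x. 0 \<le> x \<Longrightarrow> x \<le> t \<Longrightarrow> (g has_real_derivative g' x) (at x)"
      using t by (intro dg) auto
    from MVT2[OF t(1) this] obtain z where z: "0 < z" "z < t" "g t - g 0 = (t - 0) * g' z"
      by blast
    have "g' z > 0" using d1(2)[of z] z t g0 by auto
    then have "g t - g 0 > 0" using z t by simp
    moreover have "g t \<le> g 0" using mx[of t] t by auto
    ultimately show False by simp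
  qed
  with g0 show ?thesis by simp
qed

lemma basis_sq_sum:
  assumes "e \<in> (Basis :: 'a::euclidean_space set)"
  shows "(\<Sum>i\<in>Basis. (i \<bullet> e) * (i \<bullet> e)) = 1"
  using assms by (simp add: inner_Basis if_distrib cong: if_cong)

lemma basis_rep:
  assumes "e \<in> (Basis :: 'a::euclidean_space set)"
  shows "(\<Sum>i\<in>Basis. (c * (i \<bullet> e)) *\<^sub>R i) = c *\<^sub>R e"
proof -
  have "(\<Sum>i\<in>Basis. (c * (i \<bullet> e)) *\<^sub>R i) = c *\<^sub>R (\<Sum>i\<in>Basis. (e \<bullet> i) *\<^sub>R i)"
    by (simp add: scaleR_sum_right inner_commute)
  also have "\<dots> = c *\<^sub>R e" by (simp add: euclidean_representation)
  finally show ?thesis .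
qed

lemma ck2_facts:
  fixes U :: "'a::euclidean_space set" and w :: "'a \<Rightarrow> real"
  assumes "Ck_on 2 U w"
  shows "\<forall>x\<in>U. \<forall>i\<in>Basis. ((\<lambda>t. w (x + t *\<^sub>R i)) has_real_derivative pd i w x) (at 0)"
    and "\<forall>x\<in>U. \<forall>i\<in>Basis. ((\<lambda>t. pd i w (x + t *\<^sub>R i)) has_real_derivative pd i (pd i w) x) (at 0)"
    and "\<forall>i\<in>Basis. continuous_on U (pd i w)"
    and "continuous_on U w"
proof -
  have A: "\<And>is. set is \<subseteq> Basis \<Longrightarrow> length is \<le> 2 \<Longrightarrow>
        continuous_on U (iter_pd is w) \<and>
        (length is < 2 \<longrightarrow> (\<forall>x\<in>U. \<forall>i\<in>Basis.
           ((\<lambda>t. iter_pd is w (x + t *\<^sub>R i)) has_real_derivative pd i (iter_pd is w) x) (at 0)))"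
    using assms unfolding Ck_on_def by blast
  show "\<forall>x\<in>U. \<forall>i\<in>Basis. ((\<lambda>t. w (x + t *\<^sub>R i)) has_real_derivative pd i w x) (at 0)"
    using A[of "[]"] by simp
  show "continuous_on U w" using A[of "[]"] by simp
  show "\<forall>x\<in>U. \<forall>i\<in>Basis. ((\<lambda>t. pd i w (x + t *\<^sub>R i)) has_real_derivative pd i (pd i w) x) (at 0)"
  proof (intro ballI)
    fix x :: 'a and i :: 'a assume "x \<in> U" "i \<in> Basis"
    then show "((\<lambda>t. pd i w (x + t *\<^sub>R i)) has_real_derivative pd i (pd i w) x) (at 0)"
      using A[of "[i]"] by simp
  qed
  show "\<forall>i\<in>Basis. continuous_on U (pd i w)"
  proof
    fix i :: 'a assume "i \<in> Basis"
    then show "continuous_on U (pd i w)" using A[of "[i]"] by simp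
  qed
qed

lemma shift_deriv:
  fixes x0 i :: "'a::real_vector"
  assumes "((\<lambda>\<tau>. f (x0 + t *\<^sub>R i + \<tau> *\<^sub>R i)) has_real_derivative D) (at 0)"
  shows "((\<lambda>\<tau>. f (x0 + \<tau> *\<^sub>R i)) has_real_derivative D) (at t)"
proof -
  have "(\<lambda>\<tau>. f (x0 + (\<tau> + t) *\<^sub>R i)) = (\<lambda>\<tau>. f (x0 + t *\<^sub>R i + \<tau> *\<^sub>R i))"
    by (simp add: algebra_simps)
  with assms have "((\<lambda>\<tau>. f (x0 + (\<tau> + t) *\<^sub>R i)) has_real_derivative D) (at 0)" by simp
  then show ?thesis using DERIV_shift[of "\<lambda>\<tau>. f (x0 + \<tau> *\<^sub>R i)" D 0 t] by simp
qed


lemma comparison: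
  fixes U :: "'a::euclidean_space set" and H :: "'a \<Rightarrow> real" and u v :: "'a \<Rightarrow> real"
  assumes oU: "open U" and bU: "bounded U"
    and Hd: "\<And>y i. i \<in> Basis \<Longrightarrow> ((\<lambda>t. H (y + t *\<^sub>R i)) has_real_derivative pd i H y) (at 0)"
    and Hc: "\<And>i. i \<in> Basis \<Longrightarrow> continuous_on UNIV (pd i H)"
    and eps: "\<epsilon> > 0"
    and u: "classical_solution H \<epsilon> U u" and v: "classical_solution H \<epsilon> U v"
  shows "\<forall>x\<in>closure U. u x \<le> v x"
proof (rule ccontr)
  assume "\<not> (\<forall>x\<in>closure U. u x \<le> v x)"
  then obtain x1 where x1: "x1 \<in> closure U" "u x1 > v x1" by auto
  define S where "S = closure U"
  have cS: "compact S" using bU by (simp add: S_def compact_closure)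
  have Sne: "S \<noteq> {}" using x1 S_def by auto
  have uC: "Ck_on 2 U u" and ucl: "continuous_on S u" and uPDE: "\<forall>x\<in>U. H (grad u x) = \<epsilon> * laplacian u x"
    and ufr: "\<forall>x\<in>frontier U. u x = 0" using u by (auto simp: classical_solution_def S_def)
  have vC: "Ck_on 2 U v" and vcl: "continuous_on S v" and vPDE: "\<forall>x\<in>U. H (grad v x) = \<epsilon> * laplacian v x"
    and vfr: "\<forall>x\<in>frontier U. v x = 0" using v by (auto simp: classical_solution_def S_def)
  note ud1 = ck2_facts(1)[OF uC] and ud2 = ck2_facts(2)[OF uC]
  note vd1 = ck2_facts(1)[OF vC] and vd2 = ck2_facts(2)[OF vC] and vc1 = ck2_facts(3)[OF vC]
  define \<psi> where "\<psi> x = u x - v x" for x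
  have psic: "continuous_on S \<psi>" unfolding \<psi>_def using ucl vcl by (intro continuous_intros)
  have US: "U \<subseteq> S" by (simp add: S_def closure_subset)
  have psiU: "x \<in> U" if "x \<in> S" "\<psi> x \<noteq> 0" for x
  proof (rule ccontr)
    assume "x \<notin> U"
    then have "x \<in> frontier U" using that oU by (simp add: S_def frontier_def interior_open)
    then show False using that ufr vfr by (simp add: \<psi>_def)
  qed
  obtain xm where xm: "xm \<in> S" "\<And>y. y \<in> S \<Longrightarrow> \<psi> y \<le> \<psi> xm"
    using continuous_attains_sup[OF cS Sne psic] by blast
  define M where "M = \<psi> xm"
  have Mpos: "M > 0" using xm(2)[of x1] x1 by (simp add: M_def \<psi>_def S_def)
  define V where "V = {x\<in>S. M/2 \<le> \<psi> x}"
  have VU: "V \<subseteq> U" using psiU Mpos by (auto simp: V_def)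
  have "closed V" unfolding V_def
    by (rule continuous_on_closed_Collect_le) (use psic cS compact_imp_closed in auto)
  then have cV: "compact V" using cS by (metis V_def compact_Int_closed Collect_conj_eq Collect_mem_eq inf.absorb2 mem_Collect_eq subsetI)
  have gvc: "continuous_on U (grad v)" unfolding grad_def
    using vc1 by (intro continuous_intros) auto
  have "bounded (grad v ` V)"
    by (rule compact_imp_bounded, rule compact_continuous_image[OF continuous_on_subset[OF gvc VU] cV])
  then obtain B where B: "B > 0" "\<And>x. x \<in> V \<Longrightarrow> norm (grad v x) \<le> B"
    unfolding bounded_pos by auto
  obtain e :: 'a where e: "e \<in> Basis" using nonempty_Basis by blast
  have "bounded (pd e H ` cball 0 (B+1))"
    by (rule compact_imp_bounded, rule compact_continuous_image[OF continuous_on_subset[OF Hc[OF e]]]) auto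
  then obtain K where K: "K > 0" "\<And>y. y \<in> cball 0 (B+1) \<Longrightarrow> \<bar>pd e H y\<bar> \<le> K"
    unfolding bounded_pos by auto
  obtain R where R: "R > 0" "\<And>x. x \<in> S \<Longrightarrow> norm x \<le> R"
    using compact_imp_bounded[OF cS] unfolding bounded_pos by auto
  define \<alpha> where "\<alpha> = (K + 1) / \<epsilon>"
  have apos: "\<alpha> > 0" and ea: "\<epsilon> * \<alpha> = K + 1" using eps K by (auto simp: \<alpha>_def)
  define ER where "ER = exp (\<alpha> * R)"
  have ERpos: "ER > 0" by (simp add: ER_def)
  define \<eta> where "\<eta> = min (M/2) (1/\<alpha>) / ER"
  have etapos: "\<eta> > 0" using Mpos apos ERpos by (simp add: \<eta>_def)
  have eta1: "\<eta> * ER \<le> M/2" and eta2: "\<eta> * ER * \<alpha> \<le> 1"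
    using ERpos apos by (auto simp: \<eta>_def field_simps min_def)
  have Ebound: "exp (\<alpha> * (x \<bullet> e)) \<le> ER" if "x \<in> S" for x
  proof -
    have "x \<bullet> e \<le> R" using Basis_le_norm[OF e, of x] R(2)[OF that] by linarith
    then show ?thesis using apos by (simp add: ER_def)
  qed
  define \<phi> where "\<phi> x = \<psi> x + \<eta> * exp (\<alpha> * (x \<bullet> e))" for x
  have phic: "continuous_on S \<phi>" unfolding \<phi>_def using psic by (intro continuous_intros)
  obtain x0 where x0: "x0 \<in> S" "\<And>y. y \<in> S \<Longrightarrow> \<phi> y \<le> \<phi> x0"
    using continuous_attains_sup[OF cS Sne phic] by blast
  have x0V: "x0 \<in> V"
  proof (rule ccontr)
    assume "x0 \<notin> V"
    then have "\<psi> x0 < M/2" using x0 by (auto simp: V_def)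
    moreover have "\<eta> * exp (\<alpha> * (x0 \<bullet> e)) \<le> \<eta> * ER" using Ebound[OF x0(1)] etapos by simp
    ultimately have "\<phi> x0 < M" using eta1 by (simp add: \<phi>_def)
    moreover have "\<phi> xm > M" using etapos by (simp add: \<phi>_def M_def)
    ultimately show False using x0(2)[OF xm(1)] by simp
  qed
  have x0U: "x0 \<in> U" using x0V VU by auto
  obtain d where d: "d > 0" "ball x0 d \<subseteq> U" using oU x0U open_contains_ball by blast
  have inU: "x0 + t *\<^sub>R i \<in> U" if "\<bar>t\<bar> < d" "i \<in> Basis" for t i
  proof -
    have "norm (t *\<^sub>R i) < d" using that by simp
    then show ?thesis using d(2) by (auto simp: dist_norm)
  qed
  define E0 where "E0 = exp (\<alpha> * (x0 \<bullet> e))"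
  have key: "pd i u x0 - pd i v x0 + \<eta> * \<alpha> * (i \<bullet> e) * E0 = 0 \<and>
      pd i (pd i u) x0 - pd i (pd i v) x0 + \<eta> * \<alpha> * \<alpha> * ((i \<bullet> e) * (i \<bullet> e)) * E0 \<le> 0"
    if i: "i \<in> Basis" for i
  proof -
    define g where "g t = \<phi> (x0 + t *\<^sub>R i)" for t
    define g' where "g' t = pd i u (x0 + t *\<^sub>R i) - pd i v (x0 + t *\<^sub>R i)
        + \<eta> * (exp (\<alpha> * (x0 \<bullet> e + t * (i \<bullet> e))) * (\<alpha> * (i \<bullet> e)))" for t
    have expd: "((\<lambda>t. \<eta> * exp (\<alpha> * (x0 \<bullet> e + t * (i \<bullet> e)))) has_real_derivative
        \<eta> * (exp (\<alpha> * (x0 \<bullet> e + t * (i \<bullet> e))) * (\<alpha> * (i \<bullet> e)))) (at t)" for t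
      by (auto intro!: derivative_eq_intros)
    have gform: "g = (\<lambda>t. u (x0 + t *\<^sub>R i) - v (x0 + t *\<^sub>R i) + \<eta> * exp (\<alpha> * (x0 \<bullet> e + t * (i \<bullet> e))))"
      by (rule ext) (simp add: g_def \<phi>_def \<psi>_def inner_add_left)
    have dg: "(g has_real_derivative g' t) (at t)" if "\<bar>t\<bar> < d" for t
    proof -
      have y: "x0 + t *\<^sub>R i \<in> U" using inU[OF that i] .
      have du: "((\<lambda>\<tau>. u (x0 + \<tau> *\<^sub>R i)) has_real_derivative pd i u (x0 + t *\<^sub>R i)) (at t)"
        by (rule shift_deriv) (use ud1 y i in blast)
      have dv: "((\<lambda>\<tau>. v (x0 + \<tau> *\<^sub>R i)) has_real_derivative pd i v (x0 + t *\<^sub>R i)) (at t)"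
        by (rule shift_deriv) (use vd1 y i in blast)
      show ?thesis unfolding gform g'_def
        by (intro DERIV_add DERIV_diff du dv expd)
    qed
    have dg2: "(g' has_real_derivative (pd i (pd i u) x0 - pd i (pd i v) x0
        + \<eta> * (exp (\<alpha> * (x0 \<bullet> e + 0 * (i \<bullet> e))) * (\<alpha> * (i \<bullet> e)) * (\<alpha> * (i \<bullet> e))))) (at 0)"
    proof -
      have du: "((\<lambda>t. pd i u (x0 + t *\<^sub>R i)) has_real_derivative pd i (pd i u) x0) (at 0)"
        using ud2 x0U i by blast
      have dv: "((\<lambda>t. pd i v (x0 + t *\<^sub>R i)) has_real_derivative pd i (pd i v) x0) (at 0)"
        using vd2 x0U i by blast
      have de: "((\<lambda>t. \<eta> * (exp (\<alpha> * (x0 \<bullet> e + t * (i \<bullet> e))) * (\<alpha> * (i \<bullet> e)))) has_real_derivative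
        \<eta> * (exp (\<alpha> * (x0 \<bullet> e + 0 * (i \<bullet> e))) * (\<alpha> * (i \<bullet> e)) * (\<alpha> * (i \<bullet> e)))) (at 0)"
        by (auto intro!: derivative_eq_intros)
      show ?thesis unfolding g'_def[abs_def]
        by (intro DERIV_add DERIV_diff du dv de)
    qed
    have mx: "g t \<le> g 0" if "\<bar>t\<bar> < d" for t
      using x0(2)[of "x0 + t *\<^sub>R i"] inU[OF that i] US by (auto simp: g_def)
    from one_d_max2[OF d(1) dg dg2 mx] show ?thesis
      by (simp add: g'_def E0_def algebra_simps)
  qed
  define s where "s = \<eta> * \<alpha> * E0"
  have spos: "s > 0" using etapos apos by (simp add: s_def E0_def)
  have s1: "s \<le> 1"
  proof -
    have "E0 \<le> ER" using Ebound x0 by (simp add: E0_def)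
    then have "s \<le> \<eta> * \<alpha> * ER" using etapos apos by (simp add: s_def)
    then show ?thesis using eta2 by (simp add: mult.commute mult.left_commute)
  qed
  have gradu: "grad u x0 = grad v x0 + (- s) *\<^sub>R e"
  proof -
    have "grad u x0 = (\<Sum>i\<in>Basis. (pd i v x0 + (- s) * (i \<bullet> e)) *\<^sub>R i)"
      unfolding grad_def
    proof (rule sum.cong)
      fix i :: 'a assume "i \<in> Basis"
      from key[OF this] have "pd i u x0 = pd i v x0 + (- s) * (i \<bullet> e)"
        by (simp add: s_def algebra_simps)
      then show "pd i u x0 *\<^sub>R i = (pd i v x0 + (- s) * (i \<bullet> e)) *\<^sub>R i" by simp
    qed simp
    also have "\<dots> = grad v x0 + (\<Sum>i\<in>Basis. ((- s) * (i \<bullet> e)) *\<^sub>R i)"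
      unfolding grad_def sum.distrib[symmetric] by (rule sum.cong) (auto simp: scaleR_add_left scaleR_diff_left)
    also have "\<dots> = grad v x0 + (- s) *\<^sub>R e" using basis_rep[OF e, of "- s"] by (simp del: scaleR_minus_left add: scaleR_minus_left[symmetric])
    finally show ?thesis .
  qed
  have lap: "laplacian u x0 - laplacian v x0 + \<eta> * \<alpha> * \<alpha> * E0 \<le> 0"
  proof -
    have "(\<Sum>i\<in>Basis. pd i (pd i u) x0 - pd i (pd i v) x0 + \<eta> * \<alpha> * \<alpha> * ((i \<bullet> e) * (i \<bullet> e)) * E0) \<le> 0"
      by (rule sum_nonpos) (use key in blast)
    moreover have "(\<Sum>i\<in>Basis. \<eta> * \<alpha> * \<alpha> * ((i \<bullet> e) * (i \<bullet> e)) * E0) = \<eta> * \<alpha> * \<alpha> * E0"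
    proof -
      have "(\<Sum>i\<in>Basis. \<eta> * \<alpha> * \<alpha> * ((i \<bullet> e) * (i \<bullet> e)) * E0)
          = \<eta> * \<alpha> * \<alpha> * (\<Sum>i\<in>Basis. (i \<bullet> e) * (i \<bullet> e)) * E0"
        by (simp add: sum_distrib_left sum_distrib_right mult.assoc)
      then show ?thesis using basis_sq_sum[OF e] by simp
    qed
    ultimately show ?thesis
      by (simp add: laplacian_def sum.distrib sum_subtractf)
  qed
  define q where "q = grad v x0"
  have nq: "norm q \<le> B" using B(2)[OF x0V] by (simp add: q_def)
  have Hdiff: "H (q + (- s) *\<^sub>R e) - H q \<le> - (\<epsilon> * \<alpha>) * s"
  proof -
    have "H (q + (- s) *\<^sub>R e) - H q = \<epsilon> * (laplacian u x0 - laplacian v x0)"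
      using uPDE vPDE x0U gradu[symmetric] by (simp add: q_def right_diff_distrib)
    also have "\<dots> \<le> \<epsilon> * (- (\<eta> * \<alpha> * \<alpha> * E0))"
      using lap eps by (intro mult_left_mono) auto
    also have "\<dots> = - (\<epsilon> * \<alpha>) * s" by (simp add: s_def)
    finally show ?thesis .
  qed
  define h where "h t = H (q + t *\<^sub>R e)" for t
  have dh: "\<And>t. - s \<le> t \<Longrightarrow> t \<le> 0 \<Longrightarrow> (h has_real_derivative pd e H (q + t *\<^sub>R e)) (at t)"
    unfolding h_def by (rule shift_deriv) (use Hd[OF e] in blast)
  from MVT2[of "- s" 0 h, OF _ dh] spos obtain z where
    z: "- s < z" "z < 0" "h 0 - h (- s) = (0 - - s) * pd e H (q + z *\<^sub>R e)" by auto
  have "norm (q + z *\<^sub>R e) \<le> B + 1"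
  proof -
    have "norm (q + z *\<^sub>R e) \<le> norm q + norm (z *\<^sub>R e)" by (rule norm_triangle_ineq)
    also have "norm (z *\<^sub>R e) = \<bar>z\<bar>" using e by simp
    finally show ?thesis using nq z s1 by simp
  qed
  then have "pd e H (q + z *\<^sub>R e) \<le> K" using K(2)[of "q + z *\<^sub>R e"] by simp
  then have "H q - H (q + (- s) *\<^sub>R e) \<le> s * K" using z spos by (simp add: h_def)
  moreover have "H (q + (- s) *\<^sub>R e) - H q \<le> - (K * s) - s" 
  proof -
    have "- (\<epsilon> * \<alpha>) * s = - (K * s) - s" using ea by (simp add: algebra_simps)
    then show ?thesis using Hdiff by linarith
  qed
  ultimately have "K * s + s \<le> K * s" by (simp add: algebra_simps)
  with spos show False by (simp add: algebra_simps)
qed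

theorem theorem6:
  fixes U :: "'a::euclidean_space set" and H :: "'a \<Rightarrow> real"
    and \<gamma> \<delta> \<epsilon> :: real and u v :: "'a \<Rightarrow> real"
  assumes "smooth_bounded_domain U"
    and "smooth_on UNIV H"
    and "H 0 < 0"
    and "filterlim (\<lambda>p. H p / norm p) at_top at_infinity"
    and "\<gamma> > 0" and "\<delta> > 0"
    and "\<forall>p. grad H p \<bullet> p - \<gamma> * H p \<ge> \<delta>"
    and "\<epsilon> > 0"
    and "classical_solution H \<epsilon> U u"
    and "classical_solution H \<epsilon> U v"
  shows "\<forall>x\<in>closure U. u x = v x"
proof -
  have oU: "open U" and bU: "bounded U" using assms(1) by (auto simp: smooth_bounded_domain_def)
  have C1: "Ck_on 1 UNIV H" using assms(2) by (simp add: smooth_on_def)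
  have A: "\<And>is. set is \<subseteq> Basis \<Longrightarrow> length is \<le> 1 \<Longrightarrow>
        continuous_on UNIV (iter_pd is H) \<and>
        (length is < 1 \<longrightarrow> (\<forall>x\<in>UNIV. \<forall>i\<in>Basis.
           ((\<lambda>t. iter_pd is H (x + t *\<^sub>R i)) has_real_derivative pd i (iter_pd is H) x) (at 0)))"
    using C1 unfolding Ck_on_def by blast
  have Hd: "\<And>y i. i \<in> Basis \<Longrightarrow> ((\<lambda>t. H (y + t *\<^sub>R i)) has_real_derivative pd i H y) (at 0)"
    using A[of "[]"] by simp
  have Hc: "\<And>i. i \<in> Basis \<Longrightarrow> continuous_on UNIV (pd i H)"
  proof -
    fix i :: 'a assume "i \<in> Basis"
    then show "continuous_on UNIV (pd i H)" using A[of "[i]"] by simp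
  qed
  have "\<forall>x\<in>closure U. u x \<le> v x"
    by (rule comparison[OF oU bU Hd Hc assms(8,9,10)])
  moreover have "\<forall>x\<in>closure U. v x \<le> u x"
    by (rule comparison[OF oU bU Hd Hc assms(8,10,9)])
  ultimately show ?thesis by (meson order_antisym)
qed

end
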